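(* Let $(X,d)$ be a separable complete metric space, $(\Omega,\mathsf{F},\mathbb{P})$ a probability space, and $\mathcal{F}$ a sub-$\sigma$-algebra of $\mathsf{F}$. Let $\phi:X\times X\to[0,\infty)$ be a Carath\'eodory distance and let $S\subseteq X$ be a non-empty Borel set. Then for every $\mathcal{F}$-measurable $X$-valued random variable $x$ and every $\varepsilon>0$ there exists an $\mathcal{F}$-measurable $X$-valued random variable $s$ such that almost surely $s\in S$ and $\phi(s,x)\le\mathrm{dist}^\phi_S(x)+\varepsilon$.
   Context: A Carath\'eodory distance is a function $\phi:X\times X\to[0,\infty)$ continuous in its left argument and Borel measurable in its right argument. $\mathrm{dist}^\phi_S(x):=\inf_{s\in S}\phi(s,x)$. No completeness of $(\Omega,\mathcal{F},\mathbb{P})$ is assumed. *)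

theory Defs
  imports "HOL-Probability.Probability"
begin

definition caratheodory_distance :: "('a::topological_space \<Rightarrow> 'a \<Rightarrow> real) \<Rightarrow> bool" where
  "caratheodory_distance \<phi> \<longleftrightarrow>
     (\<forall>s y. 0 \<le> \<phi> s y) \<and>
     (\<forall>y. continuous_on UNIV (\<lambda>s. \<phi> s y)) \<and>
     (\<forall>s. (\<lambda>y. \<phi> s y) \<in> borel_measurable borel)"

definition dist_phi :: "('a \<Rightarrow> 'a \<Rightarrow> real) \<Rightarrow> 'a set \<Rightarrow> 'a \<Rightarrow> real" where
  "dist_phi \<phi> S x = (INF s\<in>S. \<phi> s x)"

end

theory Submission
  imports Defs
begin

lemma dense_in_subset:
  fixes S :: "'a::second_countable_topology set"
  obtains D where "countable D" "D \<subseteq> S"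
    "\<And>s U. s \<in> S \<Longrightarrow> open U \<Longrightarrow> s \<in> U \<Longrightarrow> \<exists>d\<in>D. d \<in> U"
proof -
  obtain B :: "'a set set" where B: "countable B" "topological_basis B"
    using ex_countable_basis by blast
  define D where "D = (\<lambda>b. SOME x. x \<in> b \<inter> S) ` {b\<in>B. b \<inter> S \<noteq> {}}"
  have c: "countable D" unfolding D_def using B(1) by simp
  have sub: "D \<subseteq> S" unfolding D_def by (auto intro: someI2_ex)
  have dns: "\<exists>d\<in>D. d \<in> U" if h: "s \<in> S" "open U" "s \<in> U" for s U
  proof -
    obtain b where b: "b \<in> B" "s \<in> b" "b \<subseteq> U"
      using topological_basisE[OF B(2) h(2,3)] by blast
    have ne: "b \<inter> S \<noteq> {}" using b h by blast
    hence "\<exists>x. x \<in> b \<inter> S" by blast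
    hence "(SOME x. x \<in> b \<inter> S) \<in> b \<inter> S" by (rule someI_ex)
    moreover have "(SOME x. x \<in> b \<inter> S) \<in> D" unfolding D_def using b ne by blast
    ultimately show ?thesis using b by blast
  qed
  show ?thesis by (rule that[OF c sub dns])
qed

theorem lemma2p10:
  fixes M F :: "'w measure"
    and \<phi> :: "'a::polish_space \<Rightarrow> 'a \<Rightarrow> real"
    and S :: "'a set"
    and x :: "'w \<Rightarrow> 'a"
    and \<epsilon> :: real
  assumes "prob_space M"
    and "subalgebra M F"
    and "caratheodory_distance \<phi>"
    and "S \<in> sets borel" and "S \<noteq> {}"
    and "x \<in> F \<rightarrow>\<^sub>M borel"
    and "\<epsilon> > 0"
  shows "\<exists>s \<in> F \<rightarrow>\<^sub>M borel.
           AE \<omega> in M. s \<omega> \<in> S \<and> \<phi> (s \<omega>) (x \<omega>) \<le> dist_phi \<phi> S (x \<omega>) + \<epsilon>"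
proof -
  note cd = assms(3)[unfolded caratheodory_distance_def]
  obtain D where D: "countable D" "D \<subseteq> S"
    "\<And>s U. s \<in> S \<Longrightarrow> open U \<Longrightarrow> s \<in> U \<Longrightarrow> \<exists>d\<in>D. d \<in> U"
    using dense_in_subset by blast
  have close: "\<exists>d\<in>D. \<phi> d y < \<phi> s y + e" if "s \<in> S" "e > 0" for s y e
  proof -
    have "continuous_on UNIV (\<lambda>s. \<phi> s y)" using cd by blast
    hence "open ((\<lambda>s. \<phi> s y) -` {..< \<phi> s y + e})"
      using open_vimage[of "{..< \<phi> s y + e}"] by auto
    moreover have "s \<in> (\<lambda>s. \<phi> s y) -` {..< \<phi> s y + e}" using that by simp
    ultimately show ?thesis using D(3)[OF that(1)] by fastforce
  qed
  have Dne: "D \<noteq> {}" using close[of _ 1] assms(5) by fastforce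
  define f where "f = from_nat_into D"
  have fD: "f n \<in> D" for n unfolding f_def using Dne by (simp add: from_nat_into)
  have rng: "range f = D" unfolding f_def using Dne D(1) by (simp add: range_from_nat_into)
  have bddS: "bdd_below ((\<lambda>s. \<phi> s y) ` S)" for y using cd by (auto intro!: bdd_belowI[of _ 0])
  have ex: "\<exists>n. \<phi> (f n) y < dist_phi \<phi> S y + \<epsilon>" for y
  proof -
    have "dist_phi \<phi> S y < dist_phi \<phi> S y + \<epsilon>/2" using assms(7) by simp
    then obtain s where s: "s \<in> S" "\<phi> s y < dist_phi \<phi> S y + \<epsilon>/2"
      unfolding dist_phi_def using cINF_less_iff[OF assms(5) bddS] by blast
    obtain d where "d \<in> D" "\<phi> d y < \<phi> s y + \<epsilon>/2" using close[OF s(1), of "\<epsilon>/2"] assms(7) by auto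
    moreover then obtain n where "f n = d" using rng by blast
    ultimately have "\<phi> (f n) y < \<phi> s y + \<epsilon>/2" by simp
    hence "\<phi> (f n) y < dist_phi \<phi> S y + \<epsilon>" using s(2) by linarith
    then show ?thesis by blast
  qed
  have dist_eq: "dist_phi \<phi> S y = (INF n. \<phi> (f n) y)" for y
  proof (rule antisym)
    have bddN: "bdd_below (range (\<lambda>n. \<phi> (f n) y))" using cd by (auto intro!: bdd_belowI[of _ 0])
    show "dist_phi \<phi> S y \<le> (INF n. \<phi> (f n) y)"
      unfolding dist_phi_def
    proof (rule cINF_greatest)
      fix n show "(INF s\<in>S. \<phi> s y) \<le> \<phi> (f n) y"
        using fD[of n] D(2) by (intro cINF_lower[OF bddS]) auto
    qed simp
    show "(INF n. \<phi> (f n) y) \<le> dist_phi \<phi> S y"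
    proof (rule field_le_epsilon)
      fix e :: real assume e: "e > 0"
      have "dist_phi \<phi> S y < dist_phi \<phi> S y + e/2" using e by simp
      then obtain s where s: "s \<in> S" "\<phi> s y < dist_phi \<phi> S y + e/2"
        unfolding dist_phi_def using cINF_less_iff[OF assms(5) bddS] by blast
      obtain d where "d \<in> D" "\<phi> d y < \<phi> s y + e/2" using close[OF s(1), of "e/2"] e by auto
      moreover then obtain n where "f n = d" using rng by blast
      ultimately have "\<phi> (f n) y < \<phi> s y + e/2" by simp
      hence "\<phi> (f n) y < dist_phi \<phi> S y + e" using s(2) by linarith
      moreover have "(INF n. \<phi> (f n) y) \<le> \<phi> (f n) y" by (rule cINF_lower[OF bddN]) simp
      ultimately show "(INF n. \<phi> (f n) y) \<le> dist_phi \<phi> S y + e" by simp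
    qed
  qed
  have mphi: "(\<lambda>y. \<phi> (f n) y) \<in> borel_measurable borel" for n using cd by blast
  have mdist: "dist_phi \<phi> S \<in> borel_measurable borel"
    unfolding dist_eq[abs_def] using mphi by (intro borel_measurable_cINF_real) auto
  define N where "N \<omega> = (LEAST n. \<phi> (f n) (x \<omega>) \<le> dist_phi \<phi> S (x \<omega>) + \<epsilon>)" for \<omega>
  have xm: "x \<in> borel_measurable F" using assms(6) .
  have Nm: "N \<in> measurable F (count_space UNIV)"
    unfolding N_def
  proof (rule measurable_Least)
    fix n
    have "(\<lambda>\<omega>. \<phi> (f n) (x \<omega>)) \<in> borel_measurable F"
      using measurable_comp[OF xm mphi[of n]] by (simp add: comp_def)
    moreover have "(\<lambda>\<omega>. dist_phi \<phi> S (x \<omega>)) \<in> borel_measurable F"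
      using measurable_comp[OF xm mdist] by (simp add: comp_def)
    ultimately show "(\<lambda>\<omega>. \<phi> (f n) (x \<omega>) \<le> dist_phi \<phi> S (x \<omega>) + \<epsilon>) \<in> measurable F (count_space UNIV)"
      by measurable
  qed
  define s where "s \<omega> = f (N \<omega>)" for \<omega>
  have sm: "s \<in> F \<rightarrow>\<^sub>M borel"
    unfolding s_def using measurable_comp[OF Nm, of f borel]
    by (simp add: comp_def)
  have "\<forall>\<omega>. s \<omega> \<in> S \<and> \<phi> (s \<omega>) (x \<omega>) \<le> dist_phi \<phi> S (x \<omega>) + \<epsilon>"
  proof
    fix \<omega>
    obtain n where "\<phi> (f n) (x \<omega>) < dist_phi \<phi> S (x \<omega>) + \<epsilon>" using ex by blast
    define P where "P k \<longleftrightarrow> \<phi> (f k) (x \<omega>) \<le> dist_phi \<phi> S (x \<omega>) + \<epsilon>" for k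
    have "P n" unfolding P_def using \<open>\<phi> (f n) (x \<omega>) < _\<close> by simp
    hence "P (LEAST k. P k)" by (rule LeastI)
    hence "\<phi> (f (N \<omega>)) (x \<omega>) \<le> dist_phi \<phi> S (x \<omega>) + \<epsilon>"
      unfolding N_def P_def .
    then show "s \<omega> \<in> S \<and> \<phi> (s \<omega>) (x \<omega>) \<le> dist_phi \<phi> S (x \<omega>) + \<epsilon>"
      unfolding s_def using fD D(2) by blast
  qed
  then have "AE \<omega> in M. s \<omega> \<in> S \<and> \<phi> (s \<omega>) (x \<omega>) \<le> dist_phi \<phi> S (x \<omega>) + \<epsilon>"
    by (intro AE_I2) blast
  then show ?thesis using sm by blast
qed

end
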